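(* Let $T$ be a linear operator in $H$. If there exist $z\in W_e(T)$ and $w\in\mathbb C\setminus\{0\}$ with $z+w(0,\infty)\subset W(T)$, then $z+w[0,\infty)\subset W_e(T)$.
   Context: $H$ is a separable infinite-dimensional complex Hilbert space; operators need not be closed, closable or densely defined. $W(T)=\{\langle Tx,x\rangle:x\in\operatorname{dom}(T),\|x\|=1\}$, $W_e(T)=\{\lambda:\exists x_n\in\operatorname{dom}(T),\|x_n\|=1,x_n\stackrel{w}{\to}0,\langle Tx_n,x_n\rangle\to\lambda\}$. *)

theory Defs
  imports "HOL-Analysis.Analysis"
begin

text \<open>The separable infinite-dimensional complex Hilbert space H is modelled
concretely (up to unitary equivalence) as l2(N, C): square-summable complex sequences.\<close>

definition l2 :: "(nat \<Rightarrow> complex) set" where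
  "l2 = {x. summable (\<lambda>n. (cmod (x n))\<^sup>2)}"

definition l2_inner :: "(nat \<Rightarrow> complex) \<Rightarrow> (nat \<Rightarrow> complex) \<Rightarrow> complex" where
  "l2_inner x y = (\<Sum>n. x n * cnj (y n))"

definition l2_norm :: "(nat \<Rightarrow> complex) \<Rightarrow> real" where
  "l2_norm x = sqrt (\<Sum>n. (cmod (x n))\<^sup>2)"

definition linear_operator ::
  "(nat \<Rightarrow> complex) set \<Rightarrow> ((nat \<Rightarrow> complex) \<Rightarrow> (nat \<Rightarrow> complex)) \<Rightarrow> bool" where
  "linear_operator D T \<longleftrightarrow>
     D \<subseteq> l2 \<and> (\<lambda>n. 0) \<in> D \<and>
     (\<forall>x\<in>D. \<forall>y\<in>D. (\<lambda>n. x n + y n) \<in> D) \<and>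
     (\<forall>c::complex. \<forall>x\<in>D. (\<lambda>n. c * x n) \<in> D) \<and>
     (\<forall>x\<in>D. T x \<in> l2) \<and>
     (\<forall>x\<in>D. \<forall>y\<in>D. T (\<lambda>n. x n + y n) = (\<lambda>n. T x n + T y n)) \<and>
     (\<forall>c::complex. \<forall>x\<in>D. T (\<lambda>n. c * x n) = (\<lambda>n. c * T x n))"

definition weakly_to_zero :: "(nat \<Rightarrow> (nat \<Rightarrow> complex)) \<Rightarrow> bool" where
  "weakly_to_zero x \<longleftrightarrow> (\<forall>y\<in>l2. (\<lambda>k. l2_inner (x k) y) \<longlonglongrightarrow> 0)"

definition num_range ::
  "(nat \<Rightarrow> complex) set \<Rightarrow> ((nat \<Rightarrow> complex) \<Rightarrow> (nat \<Rightarrow> complex)) \<Rightarrow> complex set" where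
  "num_range D T = {l2_inner (T x) x | x. x \<in> D \<and> l2_norm x = 1}"

definition ess_num_range ::
  "(nat \<Rightarrow> complex) set \<Rightarrow> ((nat \<Rightarrow> complex) \<Rightarrow> (nat \<Rightarrow> complex)) \<Rightarrow> complex set" where
  "ess_num_range D T = {l. \<exists>x. (\<forall>k. x k \<in> D \<and> l2_norm (x k) = 1) \<and> weakly_to_zero x \<and>
       (\<lambda>k. l2_inner (T (x k)) (x k)) \<longlonglongrightarrow> l}"

end

theory Submission
  imports Defs
begin

definition nsq :: "(nat \<Rightarrow> complex) \<Rightarrow> real" where
  "nsq x = (\<Sum>n. (cmod (x n))\<^sup>2)"

lemma l2_summ: "x \<in> l2 \<Longrightarrow> summable (\<lambda>n. (cmod (x n))\<^sup>2)"
  by (simp add: l2_def)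

lemma amgm_c: "cmod a * cmod b \<le> ((cmod a)\<^sup>2 + (cmod b)\<^sup>2) / 2"
proof -
  have "0 \<le> (cmod a - cmod b)\<^sup>2" by simp
  thus ?thesis by (simp add: power2_eq_square algebra_simps)
qed

lemma inner_summable:
  assumes "x \<in> l2" "y \<in> l2"
  shows "summable (\<lambda>n. x n * cnj (y n))"
proof (rule summable_comparison_test')
  show "summable (\<lambda>n. ((cmod (x n))\<^sup>2 + (cmod (y n))\<^sup>2) / 2)"
    using l2_summ[OF assms(1)] l2_summ[OF assms(2)]
    by (intro summable_divide summable_add)
  show "norm (x n * cnj (y n)) \<le> ((cmod (x n))\<^sup>2 + (cmod (y n))\<^sup>2) / 2" for n
    using amgm_c[of "x n" "y n"] by (simp add: norm_mult)
qed

lemma inner_norm_summable: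
  assumes "x \<in> l2" "y \<in> l2"
  shows "summable (\<lambda>n. norm (x n * cnj (y n)))"
proof (rule summable_comparison_test')
  show "summable (\<lambda>n. ((cmod (x n))\<^sup>2 + (cmod (y n))\<^sup>2) / 2)"
    using l2_summ[OF assms(1)] l2_summ[OF assms(2)]
    by (intro summable_divide summable_add)
  show "norm (norm (x n * cnj (y n))) \<le> ((cmod (x n))\<^sup>2 + (cmod (y n))\<^sup>2) / 2" for n
    using amgm_c[of "x n" "y n"] by (simp add: norm_mult)
qed

lemma inner_bound:
  assumes "x \<in> l2" "y \<in> l2"
  shows "cmod (l2_inner x y) \<le> (nsq x + nsq y) / 2"
proof -
  have "cmod (l2_inner x y) \<le> (\<Sum>n. norm (x n * cnj (y n)))"
    unfolding l2_inner_def by (rule summable_norm[OF inner_norm_summable[OF assms]])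
  also have "\<dots> \<le> (\<Sum>n. ((cmod (x n))\<^sup>2 + (cmod (y n))\<^sup>2) / 2)"
    apply (rule suminf_le)
    using amgm_c inner_norm_summable[OF assms] l2_summ[OF assms(1)] l2_summ[OF assms(2)]
    by (auto simp: norm_mult intro!: summable_divide summable_add)
  also have "\<dots> = (nsq x + nsq y) / 2"
    unfolding nsq_def
    using l2_summ[OF assms(1)] l2_summ[OF assms(2)]
    using suminf_divide[OF summable_add[OF l2_summ[OF assms(1)] l2_summ[OF assms(2)]], of 2]
      suminf_add[OF l2_summ[OF assms(1)] l2_summ[OF assms(2)]]
    by simp
  finally show ?thesis .
qed

lemma l2_add: assumes "x \<in> l2" "y \<in> l2" shows "(\<lambda>n. x n + y n) \<in> l2"
proof -
  have "summable (\<lambda>n. (cmod (x n + y n))\<^sup>2)"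
  proof (rule summable_comparison_test')
    show "summable (\<lambda>n. 2 * (cmod (x n))\<^sup>2 + 2 * (cmod (y n))\<^sup>2)"
      using l2_summ[OF assms(1)] l2_summ[OF assms(2)]
      by (intro summable_mult summable_add)
    show "norm ((cmod (x n + y n))\<^sup>2) \<le> 2 * (cmod (x n))\<^sup>2 + 2 * (cmod (y n))\<^sup>2" for n
    proof -
      have "cmod (x n + y n) \<le> cmod (x n) + cmod (y n)" by (rule norm_triangle_ineq)
      hence h1: "(cmod (x n + y n))\<^sup>2 \<le> (cmod (x n) + cmod (y n))\<^sup>2"
        by (simp add: power_mono)
      have h2: "(cmod (x n) + cmod (y n))\<^sup>2 \<le> 2 * (cmod (x n))\<^sup>2 + 2 * (cmod (y n))\<^sup>2"
        using amgm_c[of "x n" "y n"] by (simp add: power2_eq_square algebra_simps)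
      show ?thesis using order_trans[OF h1 h2] by simp
    qed
  qed
  thus ?thesis by (simp add: l2_def)
qed

lemma l2_scale: assumes "x \<in> l2" shows "(\<lambda>n. c * x n) \<in> l2"
proof -
  have "summable (\<lambda>n. (cmod c)\<^sup>2 * (cmod (x n))\<^sup>2)"
    using l2_summ[OF assms] by (rule summable_mult)
  thus ?thesis by (simp add: l2_def norm_mult power_mult_distrib)
qed

lemma inner_add_left:
  assumes "x \<in> l2" "y \<in> l2" "v \<in> l2"
  shows "l2_inner (\<lambda>n. x n + y n) v = l2_inner x v + l2_inner y v"
  unfolding l2_inner_def
  using suminf_add[OF inner_summable[OF assms(1,3)] inner_summable[OF assms(2,3)]]
  by (simp add: distrib_right)

lemma inner_add_right:
  assumes "x \<in> l2" "y \<in> l2" "v \<in> l2"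
  shows "l2_inner v (\<lambda>n. x n + y n) = l2_inner v x + l2_inner v y"
  unfolding l2_inner_def
  using suminf_add[OF inner_summable[OF assms(3,1)] inner_summable[OF assms(3,2)]]
  by (simp add: distrib_left)

lemma inner_scale_left:
  assumes "x \<in> l2" "v \<in> l2"
  shows "l2_inner (\<lambda>n. c * x n) v = c * l2_inner x v"
  unfolding l2_inner_def
  using suminf_mult[OF inner_summable[OF assms], of c]
  by (simp add: mult.assoc)

lemma inner_scale_right:
  assumes "x \<in> l2" "v \<in> l2"
  shows "l2_inner v (\<lambda>n. c * x n) = cnj c * l2_inner v x"
  unfolding l2_inner_def
  using suminf_mult[OF inner_summable[OF assms(2,1)], of "cnj c"]
  by (simp add: algebra_simps)

lemma inner_self: assumes "x \<in> l2" shows "l2_inner x x = complex_of_real (nsq x)"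
proof -
  have "l2_inner x x = (\<Sum>n. complex_of_real ((cmod (x n))\<^sup>2))"
    unfolding l2_inner_def by (simp only: complex_norm_square)
  also have "\<dots> = complex_of_real (nsq x)"
    unfolding nsq_def using suminf_of_real[OF l2_summ[OF assms]] by metis
  finally show ?thesis .
qed

lemma nsq_nonneg: assumes "x \<in> l2" shows "0 \<le> nsq x"
  unfolding nsq_def using l2_summ[OF assms] by (simp add: suminf_nonneg)

lemma l2_norm_nsq: "l2_norm x = sqrt (nsq x)"
  by (simp add: l2_norm_def nsq_def)

lemma nsq_unit: assumes "x \<in> l2" "l2_norm x = 1" shows "nsq x = 1"
  using assms nsq_nonneg[OF assms(1)] by (simp add: l2_norm_nsq)

lemma alg_key:
  fixes A C E w e :: complex and t s :: real
  assumes w: "w \<noteq> 0" and t: "t > 0" and s: "s > t" and e: "e = A + w * t"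
    and eb: "cmod e \<le> t * cmod w"
  shows "\<exists>\<beta>. (cmod \<beta>)\<^sup>2 \<le> 2 * t / (s - t) \<and>
           cmod (A + cnj \<beta> * C + \<beta> * E + \<beta> * cnj \<beta> * (w * (s - t))) \<le> cmod e"
proof -
  define C' where "C' = C / w"
  define E' where "E' = E / w"
  define D0 where "D0 = C' - cnj E'"
  define z0 where "z0 = (if D0 = 0 then 1 else D0 / cmod D0)"
  have z0n: "cmod z0 = 1" by (simp add: z0_def norm_divide)
  have z0r: "Im (cnj z0 * D0) = 0"
    by (auto simp: z0_def)
  define g0 where "g0 = cnj z0 * C' + z0 * E'"
  have "Im g0 = Im (cnj z0 * D0)"
    unfolding g0_def D0_def by (simp add: algebra_simps)
  hence g0r: "Im g0 = 0" using z0r by simp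
  define z1 where "z1 = (if Re g0 \<ge> 0 then z0 else - z0)"
  define g where "g = cnj z1 * C' + z1 * E'"
  have z1n: "cmod z1 = 1" using z0n by (simp add: z1_def)
  have gg: "g = (if Re g0 \<ge> 0 then g0 else - g0)"
    by (simp add: g_def z1_def g0_def)
  have gr: "Im g = 0" using g0r gg by simp
  have gp: "Re g \<ge> 0" using gg by auto
  define c where "c = Re g"
  have gc: "g = complex_of_real c" using gr by (simp add: c_def complex_eq_iff)
  have c0: "c \<ge> 0" using gp c_def by simp
  define \<tau> where "\<tau> = - Re (A / w)"
  have Aw: "A / w = e / w - t" using w e by (simp add: field_simps)
  have ew: "cmod (e / w) \<le> t" using eb w by (simp add: norm_divide field_simps)
  have "\<bar>Re (e / w)\<bar> \<le> t" using abs_Re_le_cmod[of "e/w"] ew by linarith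
  hence tau0: "\<tau> \<ge> 0" and tau1: "\<tau> \<le> 2 * t" using Aw by (auto simp: \<tau>_def)
  define f where "f = (\<lambda>r::real. (s - t) * r\<^sup>2 + c * r)"
  define b where "b = sqrt (\<tau> / (s - t))"
  have b0: "b \<ge> 0" using tau0 s by (simp add: b_def)
  have fb: "f b \<ge> \<tau>"
  proof -
    have "b\<^sup>2 = \<tau> / (s - t)" using tau0 s by (simp add: b_def)
    hence "(s - t) * b\<^sup>2 = \<tau>" using s by simp
    thus ?thesis using c0 b0 by (simp add: f_def)
  qed
  have "\<exists>r\<ge>0. r \<le> b \<and> f r = \<tau>"
    apply (rule IVT)
    using tau0 fb b0 by (auto simp: f_def)
  then obtain r where r0: "r \<ge> 0" and rb: "r \<le> b" and fr: "f r = \<tau>" by blast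
  define \<beta> where "\<beta> = r * z1"
  have bn: "cmod \<beta> = r" using r0 z1n by (simp add: \<beta>_def norm_mult)
  have "(cmod \<beta>)\<^sup>2 \<le> b\<^sup>2" using bn r0 rb by (simp add: power_mono)
  also have "b\<^sup>2 = \<tau> / (s - t)" using tau0 s by (simp add: b_def)
  also have "\<dots> \<le> 2 * t / (s - t)" using tau1 s by (simp add: divide_right_mono)
  finally have bsq: "(cmod \<beta>)\<^sup>2 \<le> 2 * t / (s - t)" .
  have bb: "\<beta> * cnj \<beta> = r\<^sup>2"
    using bn complex_norm_square[of \<beta>] by simp
  have "(A + cnj \<beta> * C + \<beta> * E + \<beta> * cnj \<beta> * (w * (s - t))) / w
        = A / w + r * g + r\<^sup>2 * (s - t)"
    using w unfolding bb by (simp add: g_def \<beta>_def C'_def E'_def field_simps)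
  also have "\<dots> = A / w + complex_of_real (f r)"
    by (simp add: gc f_def algebra_simps)
  also have "\<dots> = A / w + \<tau>" using fr by simp
  also have "\<dots> = \<i> * Im (A / w)"
    by (simp add: \<tau>_def complex_eq_iff)
  finally have eq: "(A + cnj \<beta> * C + \<beta> * E + \<beta> * cnj \<beta> * (w * (s - t))) / w = \<i> * Im (e / w)"
    using Aw by simp
  have "cmod (A + cnj \<beta> * C + \<beta> * E + \<beta> * cnj \<beta> * (w * (s - t)))
       = cmod w * \<bar>Im (e / w)\<bar>"
    using eq w by (simp add: norm_divide field_simps norm_mult)
  also have "\<dots> \<le> cmod w * cmod (e / w)"
    by (simp add: abs_Im_le_cmod mult_left_mono)
  also have "\<dots> = cmod e" using w by (simp add: norm_divide)
  finally show ?thesis using bsq by blast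
qed

lemma expand:
  assumes "a \<in> l2" "b \<in> l2" "c \<in> l2" "d \<in> l2"
  shows "l2_inner (\<lambda>k. a k + \<beta> * b k) (\<lambda>k. c k + \<beta> * d k)
    = l2_inner a c + cnj \<beta> * l2_inner a d + \<beta> * l2_inner b c + \<beta> * cnj \<beta> * l2_inner b d"
proof -
  have bb: "(\<lambda>k. \<beta> * b k) \<in> l2" "(\<lambda>k. \<beta> * d k) \<in> l2" using assms l2_scale by auto
  have cd: "(\<lambda>k. c k + \<beta> * d k) \<in> l2" using l2_add[OF assms(3) bb(2)] by simp
  have "l2_inner (\<lambda>k. a k + \<beta> * b k) (\<lambda>k. c k + \<beta> * d k)
      = l2_inner a (\<lambda>k. c k + \<beta> * d k) + \<beta> * l2_inner b (\<lambda>k. c k + \<beta> * d k)"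
    using inner_add_left[OF assms(1) bb(1) cd] inner_scale_left[OF assms(2) cd] by simp
  also have "\<dots> = l2_inner a c + cnj \<beta> * l2_inner a d + \<beta> * (l2_inner b c + cnj \<beta> * l2_inner b d)"
    using inner_add_right[OF assms(3) bb(2) assms(1)] inner_add_right[OF assms(3) bb(2) assms(2)]
      inner_scale_right[OF assms(4) assms(1)] inner_scale_right[OF assms(4) assms(2)]
    by simp
  finally show ?thesis by (simp add: algebra_simps)
qed

lemma step:
  fixes t :: real and z w :: complex
  assumes lin: "linear_operator D T"
    and xs: "\<forall>k. x k \<in> D \<and> l2_norm (x k) = 1"
    and conv: "(\<lambda>k. l2_inner (T (x k)) (x k)) \<longlonglongrightarrow> z"
    and w: "w \<noteq> 0" and t: "t > 0"
    and hyp: "{z + w * complex_of_real t | t. t > 0} \<subseteq> num_range D T"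
  shows "\<exists>y n \<beta> u c. y \<in> D \<and> l2_norm y = 1 \<and>
     cmod (l2_inner (T y) y - (z + w * t)) \<le> 1 / real (Suc m) \<and> m \<le> n \<and>
     cmod \<beta> \<le> 1 / real (Suc m) \<and> u \<in> l2 \<and> nsq u = 1 \<and> 0 < c \<and> c \<le> 2 \<and>
     y = (\<lambda>k. complex_of_real c * (x n k + \<beta> * u k))"
proof -
  have Dl2: "D \<subseteq> l2" and Dadd: "\<forall>x\<in>D. \<forall>y\<in>D. (\<lambda>n. x n + y n) \<in> D"
    and Dsc: "\<forall>c::complex. \<forall>x\<in>D. (\<lambda>n. c * x n) \<in> D"
    and Tl2: "\<forall>x\<in>D. T x \<in> l2"
    and Tadd: "\<forall>x\<in>D. \<forall>y\<in>D. T (\<lambda>n. x n + y n) = (\<lambda>n. T x n + T y n)"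
    and Tsc: "\<forall>c::complex. \<forall>x\<in>D. T (\<lambda>n. c * x n) = (\<lambda>n. c * T x n)"
    using lin unfolding linear_operator_def by auto
  define lam where "lam = z + w * t"
  define s where "s = t + 2 * t * (real m + 4)\<^sup>2"
  have st: "s > t" using t by (simp add: s_def)
  have "s > 0" using st t by linarith
  hence "z + w * complex_of_real s \<in> {z + w * complex_of_real t | t. t > 0}" by blast
  hence "z + w * complex_of_real s \<in> num_range D T" using hyp by blast
  then obtain u where uD: "u \<in> D" and un: "l2_norm u = 1" and qu: "l2_inner (T u) u = z + w * s"
    unfolding num_range_def by auto
  have ul2: "u \<in> l2" using uD Dl2 by auto
  have nu: "nsq u = 1" using nsq_unit[OF ul2 un] .
  define \<delta> where "\<delta> = min (t * cmod w) (1 / (2 * real (Suc m)))"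
  have d0: "\<delta> > 0" using t w by (simp add: \<delta>_def)
  have "\<forall>\<^sub>F k in sequentially. dist (l2_inner (T (x k)) (x k)) z < \<delta>"
    using conv d0 by (simp add: tendsto_iff)
  then obtain N0 where N0: "\<forall>k\<ge>N0. dist (l2_inner (T (x k)) (x k)) z < \<delta>"
    by (auto simp: eventually_sequentially)
  define n where "n = max m N0"
  have mn: "m \<le> n" by (simp add: n_def)
  have dn: "dist (l2_inner (T (x n)) (x n)) z < \<delta>" using N0 by (simp add: n_def)
  define xn where "xn = x n"
  have xD: "xn \<in> D" and xn1: "l2_norm xn = 1" using xs by (auto simp: xn_def)
  have xl2: "xn \<in> l2" using xD Dl2 by auto
  have nx: "nsq xn = 1" using nsq_unit[OF xl2 xn1] .
  have Txl2: "T xn \<in> l2" and Tul2: "T u \<in> l2" using Tl2 xD uD by auto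
  define A where "A = l2_inner (T xn) xn - lam"
  define C where "C = l2_inner (T xn) u - lam * l2_inner xn u"
  define E where "E = l2_inner (T u) xn - lam * l2_inner u xn"
  define e where "e = l2_inner (T xn) xn - z"
  have eA: "e = A + w * t" by (simp add: e_def A_def lam_def)
  have ed: "cmod e \<le> \<delta>" using dn by (simp add: e_def dist_norm xn_def)
  have eb: "cmod e \<le> t * cmod w" using ed by (simp add: \<delta>_def)
  obtain \<beta> where bsq: "(cmod \<beta>)\<^sup>2 \<le> 2 * t / (s - t)"
    and pb: "cmod (A + cnj \<beta> * C + \<beta> * E + \<beta> * cnj \<beta> * (w * (s - t))) \<le> cmod e"
    using alg_key[OF w t st eA eb] by blast
  have "2 * t / (s - t) = 1 / (real m + 4)\<^sup>2" using t by (simp add: s_def)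
  hence "(cmod \<beta>)\<^sup>2 \<le> (1 / (real m + 4))\<^sup>2" using bsq by (simp add: power_divide)
  hence bm: "cmod \<beta> \<le> 1 / (real m + 4)"
    by (rule power2_le_imp_le) simp
  have b1: "cmod \<beta> \<le> 1 / real (Suc m)"
    using bm by (smt (verit) frac_le of_nat_0_le_iff of_nat_Suc)
  have b4: "cmod \<beta> \<le> 1 / 4"
    using bm by (smt (verit) frac_le of_nat_0_le_iff)
  define yy where "yy = (\<lambda>k. xn k + \<beta> * u k)"
  have buD: "(\<lambda>k. \<beta> * u k) \<in> D" using Dsc uD by auto
  have yyD: "yy \<in> D" using Dadd xD buD by (auto simp: yy_def)
  have yyl2: "yy \<in> l2" using yyD Dl2 by auto
  have Tyy: "T yy = (\<lambda>k. T xn k + \<beta> * T u k)"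
    using Tadd xD buD Tsc uD by (simp add: yy_def)
  have qyy: "l2_inner (T yy) yy = l2_inner (T xn) xn + cnj \<beta> * l2_inner (T xn) u
      + \<beta> * l2_inner (T u) xn + \<beta> * cnj \<beta> * l2_inner (T u) u"
    unfolding Tyy unfolding yy_def by (rule expand[OF Txl2 Tul2 xl2 ul2])
  have nyy: "l2_inner yy yy = l2_inner xn xn + cnj \<beta> * l2_inner xn u
      + \<beta> * l2_inner u xn + \<beta> * cnj \<beta> * l2_inner u u"
    unfolding yy_def by (rule expand[OF xl2 ul2 xl2 ul2])
  have ixx: "l2_inner xn xn = 1" using inner_self[OF xl2] nx by simp
  have iuu: "l2_inner u u = 1" using inner_self[OF ul2] nu by simp
  define N where "N = nsq yy"
  have iyy: "l2_inner yy yy = complex_of_real N" using inner_self[OF yyl2] N_def by simp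
  have pyy: "l2_inner (T yy) yy - lam * N = A + cnj \<beta> * C + \<beta> * E + \<beta> * cnj \<beta> * (w * (s - t))"
    unfolding iyy[symmetric] qyy nyy ixx iuu qu A_def C_def E_def lam_def
    by (simp add: algebra_simps)
  have ixu: "cmod (l2_inner xn u) \<le> 1" using inner_bound[OF xl2 ul2] nx nu by simp
  have iux: "cmod (l2_inner u xn) \<le> 1" using inner_bound[OF ul2 xl2] nx nu by simp
  have "N = Re (l2_inner yy yy)" using iyy by simp
  also have "\<dots> = 1 + Re (cnj \<beta> * l2_inner xn u) + Re (\<beta> * l2_inner u xn) + (cmod \<beta>)\<^sup>2"
    unfolding nyy ixx iuu using complex_norm_square[of \<beta>]
    by (simp del: complex_norm_square add: complex_norm_square[symmetric])
  finally have Neq: "N = 1 + Re (cnj \<beta> * l2_inner xn u) + Re (\<beta> * l2_inner u xn) + (cmod \<beta>)\<^sup>2" .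
  have r1: "Re (cnj \<beta> * l2_inner xn u) \<ge> - cmod \<beta>"
  proof -
    have "\<bar>Re (cnj \<beta> * l2_inner xn u)\<bar> \<le> cmod (cnj \<beta> * l2_inner xn u)" by (rule abs_Re_le_cmod)
    also have "\<dots> \<le> cmod \<beta>" using ixu by (simp add: norm_mult mult_left_le)
    finally show ?thesis by linarith
  qed
  have r2: "Re (\<beta> * l2_inner u xn) \<ge> - cmod \<beta>"
  proof -
    have "\<bar>Re (\<beta> * l2_inner u xn)\<bar> \<le> cmod (\<beta> * l2_inner u xn)" by (rule abs_Re_le_cmod)
    also have "\<dots> \<le> cmod \<beta>" using iux by (simp add: norm_mult mult_left_le)
    finally show ?thesis by linarith
  qed
  have "0 \<le> (cmod \<beta>)\<^sup>2" by simp
  hence N2: "N \<ge> 1 / 2" using Neq r1 r2 b4 by linarith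
  define c where "c = 1 / sqrt N"
  have c0: "c > 0" using N2 by (simp add: c_def)
  have sN: "sqrt N \<ge> 1 / 2"
  proof -
    have "sqrt N \<ge> sqrt (1/4)" using N2 by (simp add: real_sqrt_le_mono)
    moreover have "sqrt (1/4 :: real) = 1/2" by (simp add: real_sqrt_divide)
    ultimately show ?thesis by simp
  qed
  have c2: "c \<le> 2" using sN unfolding c_def
    using N2 by (simp add: field_simps)
  have cN: "c * c * N = 1" using N2 by (simp add: c_def)
  define y where "y = (\<lambda>k. complex_of_real c * yy k)"
  have yD: "y \<in> D" using Dsc yyD by (simp add: y_def)
  have Ty: "T y = (\<lambda>k. complex_of_real c * T yy k)" using Tsc yyD by (simp add: y_def)
  have Tyyl2: "T yy \<in> l2" using Tl2 yyD by auto
  have "l2_inner y y = complex_of_real c * complex_of_real c * l2_inner yy yy"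
    unfolding y_def
    using inner_scale_left[OF yyl2 l2_scale[OF yyl2]] inner_scale_right[OF yyl2 yyl2]
    by simp
  also have "\<dots> = 1" unfolding iyy using cN
    by (metis of_real_1 of_real_mult)
  finally have iy: "l2_inner y y = 1" .
  have "nsq y = 1" using inner_self[OF l2_scale[OF yyl2]] iy unfolding y_def by simp
  hence yn: "l2_norm y = 1" by (simp add: l2_norm_nsq)
  have "l2_inner (T y) y = complex_of_real c * complex_of_real c * l2_inner (T yy) yy"
    unfolding Ty unfolding y_def
    using inner_scale_left[OF Tyyl2 l2_scale[OF yyl2]] inner_scale_right[OF yyl2 Tyyl2]
    by simp
  hence "l2_inner (T y) y - lam = complex_of_real (c * c) * (l2_inner (T yy) yy - lam * N)"
    using cN by (simp add: algebra_simps) (metis mult.assoc of_real_1 of_real_mult)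
  hence "cmod (l2_inner (T y) y - lam) = c * c * cmod (l2_inner (T yy) yy - lam * N)"
    using c0 by (simp add: norm_mult)
  also have "\<dots> \<le> c * c * cmod e" using pyy pb c0 by (simp add: mult_left_mono)
  also have "\<dots> \<le> 2 * \<delta>"
  proof -
    have "c * c \<le> 2" using cN N2
    proof -
      have Np: "N > 0" using N2 by linarith
      have "c * c = 1 / N" using cN Np by (simp add: field_simps)
      moreover have "1 / N \<le> 2" using N2 Np by (simp add: divide_le_eq)
      ultimately show ?thesis by simp
    qed
    thus ?thesis using ed by (intro mult_mono) auto
  qed
  finally have "cmod (l2_inner (T y) y - lam) \<le> 2 * \<delta>" .
  moreover have "2 * \<delta> \<le> 1 / real (Suc m)"
  proof -
    have "\<delta> \<le> 1 / (2 * real (Suc m))" by (simp add: \<delta>_def)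
    also have "\<dots> = (1 / real (Suc m)) / 2" by simp
    finally have "\<delta> \<le> (1 / real (Suc m)) / 2" .
    thus ?thesis by (simp add: field_simps)
  qed
  ultimately have qy: "cmod (l2_inner (T y) y - (z + w * t)) \<le> 1 / real (Suc m)"
    by (simp add: lam_def)
  have yform: "y = (\<lambda>k. complex_of_real c * (x n k + \<beta> * u k))"
    by (simp add: y_def yy_def xn_def)
  show ?thesis using yD yn qy mn b1 ul2 nu c0 c2 yform by blast
qed

theorem proposition2p4:
  fixes D :: "(nat \<Rightarrow> complex) set"
    and T :: "(nat \<Rightarrow> complex) \<Rightarrow> (nat \<Rightarrow> complex)"
    and z w :: complex
  assumes "linear_operator D T"
    and "z \<in> ess_num_range D T"
    and "w \<noteq> 0"
    and "{z + w * complex_of_real t | t. t > 0} \<subseteq> num_range D T"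
  shows "{z + w * complex_of_real t | t. t \<ge> 0} \<subseteq> ess_num_range D T"
proof
  fix l assume "l \<in> {z + w * complex_of_real t | t. t \<ge> 0}"
  then obtain t where t0: "t \<ge> 0" and l: "l = z + w * complex_of_real t" by blast
  show "l \<in> ess_num_range D T"
  proof (cases "t = 0")
    case True thus ?thesis using l assms(2) by simp
  next
    case False
    hence t: "t > 0" using t0 by simp
    obtain x where xs: "\<forall>k. x k \<in> D \<and> l2_norm (x k) = 1" and wx: "weakly_to_zero x"
      and conv: "(\<lambda>k. l2_inner (T (x k)) (x k)) \<longlonglongrightarrow> z"
      using assms(2) unfolding ess_num_range_def by blast
    have Dl2: "D \<subseteq> l2" using assms(1) unfolding linear_operator_def by auto
    have "\<forall>m. \<exists>y n \<beta> u c. y \<in> D \<and> l2_norm y = 1 \<and>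
     cmod (l2_inner (T y) y - (z + w * t)) \<le> 1 / real (Suc m) \<and> m \<le> n \<and>
     cmod \<beta> \<le> 1 / real (Suc m) \<and> u \<in> l2 \<and> nsq u = 1 \<and> 0 < c \<and> c \<le> 2 \<and>
     y = (\<lambda>k. complex_of_real c * (x n k + \<beta> * u k))"
      using step[OF assms(1) xs conv assms(3) t assms(4)] by blast
    then obtain Y NN B U Cc where H: "\<forall>m. Y m \<in> D \<and> l2_norm (Y m) = 1 \<and>
     cmod (l2_inner (T (Y m)) (Y m) - (z + w * t)) \<le> 1 / real (Suc m) \<and> m \<le> NN m \<and>
     cmod (B m) \<le> 1 / real (Suc m) \<and> U m \<in> l2 \<and> nsq (U m) = 1 \<and> 0 < Cc m \<and> Cc m \<le> 2 \<and>
     Y m = (\<lambda>k. complex_of_real (Cc m) * (x (NN m) k + B m * U m k))"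
      by (simp only: choice_iff) blast
    have lim0: "(\<lambda>m. 1 / real (Suc m)) \<longlonglongrightarrow> 0"
      using LIMSEQ_inverse_real_of_nat by (simp add: inverse_eq_divide)
    have NNf: "filterlim NN sequentially sequentially"
      by (rule filterlim_at_top_mono[OF filterlim_ident]) (use H in auto)
    have wY: "weakly_to_zero Y"
      unfolding weakly_to_zero_def
    proof
      fix v assume v: "v \<in> l2"
      have xl2: "x k \<in> l2" for k using xs Dl2 by auto
      have a0: "(\<lambda>m. l2_inner (x (NN m)) v) \<longlonglongrightarrow> 0"
        using filterlim_compose[OF _ NNf] wx v unfolding weakly_to_zero_def by blast
      define K where "K = (1 + nsq v) / 2"
      have bound: "cmod (l2_inner (Y m) v) \<le> 2 * (cmod (l2_inner (x (NN m)) v) + 1 / real (Suc m) * K)" for m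
      proof -
        have Ul2: "U m \<in> l2" using H by blast
        have bu: "(\<lambda>k. B m * U m k) \<in> l2" using l2_scale[OF Ul2] .
        have s1: "(\<lambda>k. x (NN m) k + B m * U m k) \<in> l2" using l2_add[OF xl2 bu] .
        have "l2_inner (Y m) v = Cc m * (l2_inner (x (NN m)) v + B m * l2_inner (U m) v)"
          using H inner_scale_left[OF s1 v] inner_add_left[OF xl2 bu v] inner_scale_left[OF Ul2 v]
          by simp
        hence "cmod (l2_inner (Y m) v) = Cc m * cmod (l2_inner (x (NN m)) v + B m * l2_inner (U m) v)"
        proof -
          have "Cc m > 0" using H by blast
          thus ?thesis using \<open>l2_inner (Y m) v = _\<close> by (simp add: norm_mult)
        qed
        also have "\<dots> \<le> 2 * (cmod (l2_inner (x (NN m)) v) + 1 / real (Suc m) * K)"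
        proof (rule mult_mono)
          show "Cc m \<le> 2" using H by blast
          have "cmod (l2_inner (U m) v) \<le> K" using inner_bound[OF Ul2 v] H by (simp add: K_def)
          hence "cmod (B m * l2_inner (U m) v) \<le> 1 / real (Suc m) * K"
            unfolding norm_mult using H by (intro mult_mono) auto
          thus "cmod (l2_inner (x (NN m)) v + B m * l2_inner (U m) v)
                \<le> cmod (l2_inner (x (NN m)) v) + 1 / real (Suc m) * K"
            by (meson add_left_mono norm_triangle_ineq order_trans)
        qed (auto)
        finally show ?thesis .
      qed
      have g0: "(\<lambda>m. 2 * (cmod (l2_inner (x (NN m)) v) + 1 / real (Suc m) * K)) \<longlonglongrightarrow> 0"
        using tendsto_mult[OF tendsto_const[of 2] tendsto_add[OF tendsto_norm_zero[OF a0] tendsto_mult[OF lim0 tendsto_const[of K]]]]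
        by simp
      show "(\<lambda>m. l2_inner (Y m) v) \<longlonglongrightarrow> 0"
        by (rule Lim_null_comparison[OF _ g0]) (use bound in auto)
    qed
    have cY: "(\<lambda>m. l2_inner (T (Y m)) (Y m)) \<longlonglongrightarrow> l"
    proof -
      have hb: "norm (l2_inner (T (Y m)) (Y m) - l) \<le> 1 / real (Suc m)" for m
        using H l by blast
      have "(\<lambda>m. l2_inner (T (Y m)) (Y m) - l) \<longlonglongrightarrow> 0"
        by (rule Lim_null_comparison[OF always_eventually[OF allI[OF hb]] lim0])
      thus ?thesis by (rule LIM_zero_cancel)
    qed
    show ?thesis unfolding ess_num_range_def using H wY cY by blast
  qed
qed

end
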